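(* Suppose $f^{cl}_{\pi_\star}$ is $\delta$-ISS (for all perturbations, i.e. $\eta=\infty$) with linear gain $\gamma(x)=\gamma x$, $\gamma>0$. Fix a policy $\pi$ and $\xi\in\mathcal X$, assume $\pi,\pi_\star$ are continuously differentiable with $\|\bar\pi(x)-\bar\pi(x_0)-\partial_x\bar\pi(x_0)(x-x_0)\|\le\frac{L_{\partial\pi}}{2}\|x-x_0\|^2$ for all $x,x_0$ and $\bar\pi\in\{\pi,\pi_\star\}$, and assume $\gamma L_{\partial\pi}\ge1$. If \[\max_{0\le t\le T-1}\|\partial_x\Delta_t^{\pi_\star}(\xi;\pi)\|\le\frac1{4\gamma},\qquad\max_{0\le t\le T-1}\|\Delta_t^{\pi_\star}(\xi;\pi)\|\le\frac1{16\gamma^2L_{\partial\pi}},\] then for all $1\le t\le T$, $\|x_t^{\pi_\star}(\xi)-x_t^\pi(\xi)\|\le\max_{0\le k\le t-1}8\gamma\|\Delta_k^{\pi_\star}(\xi;\pi)\|$.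
   Context: Dynamics $x_{t+1}=f(x_t,u_t)$, $x_0=\xi$. For a policy $\pi$, $f^{cl}_\pi(x,\Delta):=f(x,\pi(x)+\Delta)$; $x_t^\pi(\xi,\{\Delta_s\})$ is the state at time $t$, $x_t^\pi(\xi):=x_t^\pi(\xi,\{0\})$; initial conditions in compact $\mathcal X$. $f^{cl}_{\pi_\star}$ is $\delta$-ISS with gain $\gamma(\cdot)$ if there is a class $\mathcal{KL}$ function $\beta$ with $\|x_t^{\pi_\star}(\xi_1;\{\Delta_s\}_{s=0}^{t-1})-x_t^{\pi_\star}(\xi_2;\{0\})\|\le\beta(\|\xi_1-\xi_2\|,t)+\gamma(\max_{0\le k\le t-1}\|\Delta_k\|)$ for all $\xi_1,\xi_2\in\mathcal X$, all $t$ and all perturbation sequences. $\Delta_t^{\pi_\star}(\xi;\pi):=\pi(x_t^{\pi_\star}(\xi))-\pi_\star(x_t^{\pi_\star}(\xi))$ and $\partial_x\Delta_t^{\pi_\star}(\xi;\pi):=\partial_x\pi(x_t^{\pi_\star}(\xi))-\partial_x\pi_\star(x_t^{\pi_\star}(\xi))$; norms are Euclidean/operator norms. *)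

theory Defs
  imports "HOL-Analysis.Analysis"
begin

primrec traj :: "('x \<Rightarrow> 'u::real_vector \<Rightarrow> 'x) \<Rightarrow> ('x \<Rightarrow> 'u) \<Rightarrow> 'x \<Rightarrow> (nat \<Rightarrow> 'u) \<Rightarrow> nat \<Rightarrow> 'x" where
  "traj f \<pi> \<xi> \<Delta> 0 = \<xi>"
| "traj f \<pi> \<xi> \<Delta> (Suc t) = f (traj f \<pi> \<xi> \<Delta> t) (\<pi> (traj f \<pi> \<xi> \<Delta> t) + \<Delta> t)"

definition maxupto :: "(nat \<Rightarrow> real) \<Rightarrow> nat \<Rightarrow> real" where
  "maxupto a t = (if t = 0 then 0 else Max (a ` {..<t}))"

definition classK :: "(real \<Rightarrow> real) \<Rightarrow> bool" where
  "classK \<alpha> \<longleftrightarrow> continuous_on {0..} \<alpha> \<and> strict_mono_on {0..} \<alpha> \<and> \<alpha> 0 = 0"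

definition classKL :: "(real \<Rightarrow> nat \<Rightarrow> real) \<Rightarrow> bool" where
  "classKL \<beta> \<longleftrightarrow> (\<forall>t. classK (\<lambda>r. \<beta> r t)) \<and>
     (\<forall>r\<ge>0. antimono (\<beta> r) \<and> (\<beta> r \<longlonglongrightarrow> 0))"

definition delta_ISS :: "('x::real_normed_vector \<Rightarrow> 'u::real_normed_vector \<Rightarrow> 'x) \<Rightarrow> ('x \<Rightarrow> 'u) \<Rightarrow> 'x set
     \<Rightarrow> (real \<Rightarrow> real) \<Rightarrow> bool" where
  "delta_ISS f \<pi> X \<gamma> \<longleftrightarrow> (\<exists>\<beta>. classKL \<beta> \<and>
     (\<forall>\<xi>1\<in>X. \<forall>\<xi>2\<in>X. \<forall>t. \<forall>\<Delta>.
        norm (traj f \<pi> \<xi>1 \<Delta> t - traj f \<pi> \<xi>2 (\<lambda>_. 0) t)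
          \<le> \<beta> (norm (\<xi>1 - \<xi>2)) t + \<gamma> (maxupto (\<lambda>k. norm (\<Delta> k)) t)))"

end

theory Submission
  imports Defs
begin

lemma maxupto_ge: "k < t \<Longrightarrow> a k \<le> maxupto a t"
  unfolding maxupto_def by (auto intro!: Max_ge)

lemma maxupto_le: "0 < t \<Longrightarrow> (\<And>k. k < t \<Longrightarrow> a k \<le> c) \<Longrightarrow> maxupto a t \<le> c"
  unfolding maxupto_def by (auto intro!: Max.boundedI)

lemma maxupto_nonneg: "(\<And>k. a k \<ge> 0) \<Longrightarrow> maxupto a t \<ge> 0"
  proof (cases "t = 0")
  case False
  assume "\<And>k. a k \<ge> 0"
  then show ?thesis using maxupto_ge[of 0 t a] False by (meson order_trans not_gr_zero)
qed (simp add: maxupto_def)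

lemma maxupto_mono: "k \<le> t \<Longrightarrow> (\<And>k. a k \<ge> 0) \<Longrightarrow> maxupto a k \<le> maxupto a t"
proof (cases "k = 0")
  case True
  assume "\<And>k. a k \<ge> 0" then show ?thesis using True maxupto_nonneg[of a t] by (simp add: maxupto_def)
next
  case False
  assume "k \<le> t"
  then show ?thesis using False by (intro maxupto_le) (auto intro: maxupto_ge)
qed

lemma traj_pert: "traj f \<pi> \<xi> (\<lambda>_. 0) t = traj f \<pi>s \<xi> (\<lambda>k. \<pi> (traj f \<pi> \<xi> (\<lambda>_. 0) k) - \<pi>s (traj f \<pi> \<xi> (\<lambda>_. 0) k)) t"
  by (induction t) auto

theorem mainTheorem5:
  fixes f :: "'x::euclidean_space \<Rightarrow> 'u::euclidean_space \<Rightarrow> 'x"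
    and \<pi> \<pi>s :: "'x \<Rightarrow> 'u"
    and D\<pi> D\<pi>s :: "'x \<Rightarrow> ('x \<Rightarrow>\<^sub>L 'u)"
    and X :: "'x set" and \<xi> :: 'x
    and \<gamma> L :: real and T :: nat
  assumes "compact X"
    and "\<gamma> > 0"
    and ISS: "delta_ISS f \<pi>s X (\<lambda>r. \<gamma> * r)"
    and "\<xi> \<in> X"
    and "\<And>x. (\<pi> has_derivative blinfun_apply (D\<pi> x)) (at x)"
    and "\<And>x. (\<pi>s has_derivative blinfun_apply (D\<pi>s x)) (at x)"
    and "continuous_on UNIV D\<pi>" and "continuous_on UNIV D\<pi>s"
    and "\<And>x x0. norm (\<pi> x - \<pi> x0 - D\<pi> x0 (x - x0)) \<le> L / 2 * (norm (x - x0))\<^sup>2"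
    and "\<And>x x0. norm (\<pi>s x - \<pi>s x0 - D\<pi>s x0 (x - x0)) \<le> L / 2 * (norm (x - x0))\<^sup>2"
    and "\<gamma> * L \<ge> 1"
    and "maxupto (\<lambda>t. norm (D\<pi> (traj f \<pi>s \<xi> (\<lambda>_. 0) t) - D\<pi>s (traj f \<pi>s \<xi> (\<lambda>_. 0) t))) T
           \<le> 1 / (4 * \<gamma>)"
    and "maxupto (\<lambda>t. norm (\<pi> (traj f \<pi>s \<xi> (\<lambda>_. 0) t) - \<pi>s (traj f \<pi>s \<xi> (\<lambda>_. 0) t))) T
           \<le> 1 / (16 * \<gamma>\<^sup>2 * L)"
  shows "\<forall>t. 1 \<le> t \<and> t \<le> T \<longrightarrow>
           norm (traj f \<pi>s \<xi> (\<lambda>_. 0) t - traj f \<pi> \<xi> (\<lambda>_. 0) t)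
             \<le> maxupto (\<lambda>k. 8 * \<gamma> * norm (\<pi> (traj f \<pi>s \<xi> (\<lambda>_. 0) k) - \<pi>s (traj f \<pi>s \<xi> (\<lambda>_. 0) k))) t"
proof -
  let ?y = "traj f \<pi>s \<xi> (\<lambda>_. 0)"
  let ?x = "traj f \<pi> \<xi> (\<lambda>_. 0)"
  define \<delta> where "\<delta> k = norm (\<pi> (?y k) - \<pi>s (?y k))" for k
  define A where "A t = maxupto (\<lambda>k. 8 * \<gamma> * \<delta> k) t" for t
  define D' where "D' k = \<pi> (?x k) - \<pi>s (?x k)" for k
  have g: "\<gamma> > 0" by fact
  have Lpos: "L > 0"
  proof (rule ccontr)
    assume "\<not> L > 0"
    then have "\<gamma> * L \<le> 0" using g mult_nonneg_nonpos[of \<gamma> L] by linarith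
    then show False using assms(11) by linarith
  qed
  have Anon: "A t \<ge> 0" for t unfolding A_def \<delta>_def using g by (intro maxupto_nonneg) simp
  have Amono: "k \<le> t \<Longrightarrow> A k \<le> A t" for k t unfolding A_def \<delta>_def using g by (intro maxupto_mono) auto
  have dA: "k < t \<Longrightarrow> 8 * \<gamma> * \<delta> k \<le> A t" for k t unfolding A_def by (rule maxupto_ge)
  have AT: "A t \<le> 1 / (2 * \<gamma> * L)" if "t \<le> T" for t
  proof (cases "t = 0")
    case True then show ?thesis using Anon[of 0] g Lpos by (simp add: A_def maxupto_def)
  next
    case False
    have "A t \<le> 8 * \<gamma> * (1 / (16 * \<gamma>\<^sup>2 * L))"
      unfolding A_def
    proof (rule maxupto_le)
      fix k assume "k < t"
      then have "\<delta> k \<le> 1 / (16 * \<gamma>\<^sup>2 * L)" using that assms(13) maxupto_ge[of k T]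
        unfolding \<delta>_def by (meson less_le_trans order_trans)
      then show "8 * \<gamma> * \<delta> k \<le> 8 * \<gamma> * (1 / (16 * \<gamma>\<^sup>2 * L))" by (rule mult_left_mono) (use g in auto)
    qed (use False in auto)
    also have "\<dots> = 1 / (2 * \<gamma> * L)" using g Lpos by (simp add: power2_eq_square field_simps)
    finally show ?thesis .
  qed
  obtain \<beta> where KL: "classKL \<beta>" and ISSb: "\<forall>\<xi>1\<in>X. \<forall>\<xi>2\<in>X. \<forall>t. \<forall>\<Delta>.
        norm (traj f \<pi>s \<xi>1 \<Delta> t - traj f \<pi>s \<xi>2 (\<lambda>_. 0) t)
          \<le> \<beta> (norm (\<xi>1 - \<xi>2)) t + \<gamma> * (maxupto (\<lambda>k. norm (\<Delta> k)) t)"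
    using ISS unfolding delta_ISS_def by blast
  have b0: "\<beta> 0 t = 0" for t using KL unfolding classKL_def classK_def by blast
  have ISSx: "norm (?y t - ?x t) \<le> \<gamma> * maxupto (\<lambda>k. norm (D' k)) t" for t
  proof -
    have tp: "?x t = traj f \<pi>s \<xi> D' t" unfolding D'_def by (rule traj_pert)
    show ?thesis using ISSb[rule_format, OF assms(4) assms(4), of D' t] b0
      by (simp add: tp norm_minus_commute)
  qed
  have main: "t \<le> T \<longrightarrow> norm (?y t - ?x t) \<le> A t" for t
  proof (induction t rule: less_induct)
    case (less t)
    show ?case
    proof (cases "t = 0")
      case True then show ?thesis using Anon[of 0] by simp
    next
      case False
      show ?thesis
      proof
        assume tT: "t \<le> T"
        have "maxupto (\<lambda>k. norm (D' k)) t \<le> 7 * A t / (8 * \<gamma>)"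
        proof (rule maxupto_le)
          fix k assume kt: "k < t"
          define e where "e = ?x k - ?y k"
          have ek: "norm e \<le> A t" using less[rule_format, OF kt] kt tT Amono[of k t]
            by (simp add: e_def norm_minus_commute)
          have eb: "norm e \<le> 1 / (2 * \<gamma> * L)" using ek AT[OF tT] by simp
          have dk: "\<delta> k \<le> A t / (8 * \<gamma>)" using dA[OF kt] g by (simp add: field_simps)
          have Dk: "norm (D\<pi> (?y k) - D\<pi>s (?y k)) \<le> 1 / (4 * \<gamma>)"
            using assms(12) maxupto_ge[of k T] kt tT by (meson less_le_trans order_trans)
          have id: "D' k = (\<pi> (?y k) - \<pi>s (?y k)) + (D\<pi> (?y k) - D\<pi>s (?y k)) e
              + (\<pi> (?x k) - \<pi> (?y k) - D\<pi> (?y k) e) - (\<pi>s (?x k) - \<pi>s (?y k) - D\<pi>s (?y k) e)"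
            by (simp add: D'_def blinfun.diff_left algebra_simps)
          have r1: "norm (\<pi> (?x k) - \<pi> (?y k) - D\<pi> (?y k) e) \<le> L / 2 * (norm e)\<^sup>2"
            using assms(9) e_def by blast
          have r2: "norm (\<pi>s (?x k) - \<pi>s (?y k) - D\<pi>s (?y k) e) \<le> L / 2 * (norm e)\<^sup>2"
            using assms(10) e_def by blast
          have lin: "norm ((D\<pi> (?y k) - D\<pi>s (?y k)) e) \<le> 1 / (4 * \<gamma>) * norm e"
            by (rule order_trans[OF norm_blinfun mult_right_mono[OF Dk norm_ge_zero]])
          have "norm (D' k) \<le> \<delta> k + 1 / (4 * \<gamma>) * norm e + L * (norm e)\<^sup>2"
            unfolding id \<delta>_def
            using r1 r2 lin norm_triangle_ineq[of "\<pi> (?y k) - \<pi>s (?y k) + (D\<pi> (?y k) - D\<pi>s (?y k)) e" "\<pi> (?x k) - \<pi> (?y k) - D\<pi> (?y k) e"]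
              norm_triangle_ineq[of "\<pi> (?y k) - \<pi>s (?y k)" "(D\<pi> (?y k) - D\<pi>s (?y k)) e"]
              norm_triangle_ineq4[of "\<pi> (?y k) - \<pi>s (?y k) + (D\<pi> (?y k) - D\<pi>s (?y k)) e + (\<pi> (?x k) - \<pi> (?y k) - D\<pi> (?y k) e)" "\<pi>s (?x k) - \<pi>s (?y k) - D\<pi>s (?y k) e"]
            by linarith
          also have "L * (norm e)\<^sup>2 \<le> L * (norm e * (1 / (2 * \<gamma> * L)))"
            unfolding power2_eq_square by (intro mult_left_mono) (use eb Lpos in auto)
          also have "\<dots> = norm e / (2 * \<gamma>)" using Lpos by simp
          finally have "norm (D' k) \<le> \<delta> k + 1 / (4 * \<gamma>) * norm e + norm e / (2 * \<gamma>)" by simp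
          also have "\<dots> \<le> A t / (8 * \<gamma>) + 1 / (4 * \<gamma>) * A t + A t / (2 * \<gamma>)"
            using dk ek g by (intro add_mono mult_left_mono divide_right_mono) auto
          also have "\<dots> = 7 * A t / (8 * \<gamma>)" using g by (simp add: field_simps)
          finally show "norm (D' k) \<le> 7 * A t / (8 * \<gamma>)" .
        qed (use False in auto)
        then have "\<gamma> * maxupto (\<lambda>k. norm (D' k)) t \<le> \<gamma> * (7 * A t / (8 * \<gamma>))"
          by (rule mult_left_mono) (use g in auto)
        also have "\<dots> \<le> A t" using g Anon[of t] by simp
        finally show "norm (?y t - ?x t) \<le> A t" using ISSx[of t] by simp
      qed
    qed
  qed
  show ?thesis using main unfolding A_def \<delta>_def by blast
qed

end
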